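(* Let $A\in(0,1)$, $M<0$, $Q>0$, $S>0$ and consider the planar system $$\frac{du}{d\tau}=u^2\big((u+A)(1-u)(u-M)-Qv\big),\qquad \frac{dv}{d\tau}=S(u+A)(u-v)v$$ on $\{u\ge0,\ v\ge0\}$, whose positive equilibria are the points $(u,u)$ with $u>0$ a root of $g(u)=u^3-Tu^2-Lu+AM$, where $T=1-A+M$ and $L=A(M+1)-Q-M$. Let $u^*\in(0,1)$ be a root of $g$ and $\Delta=(u^*-T)^2-4\big(u^*(u^*-T)-L\big)$. Then the positive roots of $g$ lie in $(0,1)$, and: (I) if $T\le 0$ or $L\ge 0$, then $g$ has exactly one positive root, so the system has one positive equilibrium; (II) if $T>0$ and $L<0$, then: (i) if $\Delta<0$, then $g$ has exactly one positive root, so the system has one positive equilibrium; (ii) if $\Delta\ge 0$, then $g$ has three positive roots counting multiplicity, namely $u^*$ and $u^*_\pm=\tfrac12\big(T-u^*\pm\sqrt{\Delta}\big)$, so the system has three positive equilibria counting multiplicity.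
   Context: A root $u^*\in(0,1)$ of $g$ always exists because $g(0)=AM<0<Q=g(1)$. $\Delta$ is the discriminant of the quadratic $u^2+(u^*-T)u+u^*(u^*-T)-L$, which equals $g(u)/(u-u^* )$. *)

theory Defs
  imports Complex_Main
begin

definition field_u :: "real \<Rightarrow> real \<Rightarrow> real \<Rightarrow> real \<Rightarrow> real \<Rightarrow> real" where
  "field_u A M Q u v = u^2 * ((u + A) * (1 - u) * (u - M) - Q * v)"

definition field_v :: "real \<Rightarrow> real \<Rightarrow> real \<Rightarrow> real \<Rightarrow> real" where
  "field_v A S u v = S * (u + A) * (u - v) * v"

definition pos_equilibria :: "real \<Rightarrow> real \<Rightarrow> real \<Rightarrow> real \<Rightarrow> (real \<times> real) set" where
  "pos_equilibria A M Q S =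
     {(u, v). u > 0 \<and> v > 0 \<and> field_u A M Q u v = 0 \<and> field_v A S u v = 0}"

definition T_par :: "real \<Rightarrow> real \<Rightarrow> real" where
  "T_par A M = 1 - A + M"

definition L_par :: "real \<Rightarrow> real \<Rightarrow> real \<Rightarrow> real" where
  "L_par A M Q = A * (M + 1) - Q - M"

definition gpoly :: "real \<Rightarrow> real \<Rightarrow> real \<Rightarrow> real \<Rightarrow> real" where
  "gpoly A M Q u = u^3 - T_par A M * u^2 - L_par A M Q * u + A * M"

end

theory Submission
  imports Defs
begin

lemma g_alt: "gpoly A M Q u = (u + A) * (u - 1) * (u - M) + Q * u"
  unfolding gpoly_def T_par_def L_par_def by (simp add: algebra_simps power2_eq_square power3_eq_cube)

lemma fu_alt: "field_u A M Q u u = - (u^2 * gpoly A M Q u)"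
  unfolding field_u_def g_alt by (simp add: algebra_simps)

lemma eq_char:
  assumes "0 < A" "S > 0"
  shows "pos_equilibria A M Q S = (\<lambda>u. (u,u)) ` {u. u > 0 \<and> gpoly A M Q u = 0}"
proof (rule set_eqI)
  fix p :: "real \<times> real"
  obtain u v where p: "p = (u,v)" by (cases p)
  show "p \<in> pos_equilibria A M Q S \<longleftrightarrow> p \<in> (\<lambda>u. (u,u)) ` {u. u > 0 \<and> gpoly A M Q u = 0}"
  proof
    assume "p \<in> pos_equilibria A M Q S"
    then have h: "u > 0" "v > 0" "field_u A M Q u v = 0" "field_v A S u v = 0"
      unfolding pos_equilibria_def p by auto
    have "S * (u + A) * v \<noteq> 0" using h assms by auto
    then have "u = v" using h(4) unfolding field_v_def
      by (metis mult.commute mult.left_commute mult_eq_0_iff right_minus_eq)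
    then have "gpoly A M Q u = 0" using h(3) fu_alt[of A M Q u] h(1) by simp
    then show "p \<in> (\<lambda>u. (u,u)) ` {u. u > 0 \<and> gpoly A M Q u = 0}" using p \<open>u = v\<close> h by auto
  next
    assume "p \<in> (\<lambda>u. (u,u)) ` {u. u > 0 \<and> gpoly A M Q u = 0}"
    then obtain w where "p = (w,w)" "w > 0" "gpoly A M Q w = 0" by auto
    then show "p \<in> pos_equilibria A M Q S"
      unfolding pos_equilibria_def using fu_alt[of A M Q w] by (simp add: field_v_def)
  qed
qed

lemma two_roots:
  assumes "a > 0" "b > 0" "a \<noteq> b" "gpoly A M Q a = 0" "gpoly A M Q b = 0" "A * M < 0"
  shows "T_par A M > 0 \<and> L_par A M Q < 0"
proof -
  define T where "T = T_par A M"
  define L where "L = L_par A M Q"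
  define r where "r = T - a - b"
  have ga: "a^3 - T*a^2 - L*a + A*M = 0" using assms(4) unfolding gpoly_def T_def L_def .
  have gb: "b^3 - T*b^2 - L*b + A*M = 0" using assms(5) unfolding gpoly_def T_def L_def .
  have "(a - b) * (a^2 + a*b + b^2 - T*(a+b) - L) = 0"
    using ga gb by (simp add: algebra_simps power2_eq_square power3_eq_cube)
  then have e1: "a^2 + a*b + b^2 - T*(a+b) - L = 0" using assms(3) by simp
  then have hL: "- L = a*b + (a+b)*r" unfolding r_def by (simp add: algebra_simps power2_eq_square)
  have "A*M = - (a*b*r)"
  proof -
    have "A*M = T*a^2 + L*a - a^3" using ga by simp
    also have "\<dots> = - (a*b*r)"
    proof -
      have "L = a^2 + a*b + b^2 - T*(a+b)" using e1 by simp
      then show ?thesis unfolding r_def by algebra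
    qed
    finally show ?thesis .
  qed
  then have "a*b*r > 0" using assms(6) by simp
  then have "r > 0" using assms(1,2)
    by (metis mult_pos_pos not_less_iff_gr_or_eq zero_less_mult_pos)
  then have "L < 0" using hL assms(1,2) by (smt (verit) mult_pos_pos)
  moreover have "T > 0" using \<open>r > 0\<close> assms(1,2) unfolding r_def by simp
  ultimately show ?thesis unfolding T_def L_def by simp
qed

theorem lemma1:
  fixes A M Q S ustar :: real
  assumes hA: "0 < A" "A < 1" and hM: "M < 0" and hQ: "Q > 0" and hS: "S > 0"
    and hu: "0 < ustar" "ustar < 1" "gpoly A M Q ustar = 0"
  defines "T \<equiv> T_par A M" and "L \<equiv> L_par A M Q"
    and "\<Delta> \<equiv> (ustar - T_par A M)^2 - 4 * (ustar * (ustar - T_par A M) - L_par A M Q)"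
  shows "(\<forall>u. u > 0 \<and> gpoly A M Q u = 0 \<longrightarrow> u < 1)
    \<and> ((T \<le> 0 \<or> L \<ge> 0) \<longrightarrow>
         card {u. u > 0 \<and> gpoly A M Q u = 0} = 1 \<and> card (pos_equilibria A M Q S) = 1)
    \<and> ((T > 0 \<and> L < 0 \<and> \<Delta> < 0) \<longrightarrow>
         card {u. u > 0 \<and> gpoly A M Q u = 0} = 1 \<and> card (pos_equilibria A M Q S) = 1)
    \<and> ((T > 0 \<and> L < 0 \<and> \<Delta> \<ge> 0) \<longrightarrow>
         (let up = (T - ustar + sqrt \<Delta>) / 2; um = (T - ustar - sqrt \<Delta>) / 2 in
            up > 0 \<and> um > 0 \<and>
            (\<forall>x. gpoly A M Q x = (x - ustar) * (x - up) * (x - um)) \<and>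
            pos_equilibria A M Q S = {(x, x) | x. x \<in> {ustar, up, um}}))"
proof -
  have AM: "A * M < 0" using hA hM by (simp add: mult_pos_neg)
  define q where "q x = x^2 + (ustar - T)*x + (ustar*(ustar - T) - L)" for x
  have gfac: "gpoly A M Q x = (x - ustar) * q x" for x
  proof -
    have "gpoly A M Q x = gpoly A M Q x - gpoly A M Q ustar" using hu by simp
    also have "\<dots> = (x - ustar) * q x" unfolding gpoly_def q_def T_def L_def
      by (simp add: algebra_simps power2_eq_square power3_eq_cube)
    finally show ?thesis .
  qed
  define c where "c = ustar*(ustar - T) - L"
  have "ustar * c = - (A*M)"
  proof -
    have "0 = ustar^3 - T*ustar^2 - L*ustar + A*M" using hu(3) unfolding gpoly_def T_def L_def by simp
    then show ?thesis unfolding c_def by (simp add: algebra_simps power2_eq_square power3_eq_cube)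
  qed
  then have cpos: "c > 0" using AM hu(1) by (smt (verit) mult_nonneg_nonpos)
  have P1: "\<forall>u. u > 0 \<and> gpoly A M Q u = 0 \<longrightarrow> u < 1"
  proof (intro allI impI)
    fix u assume h: "u > 0 \<and> gpoly A M Q u = 0"
    show "u < 1"
    proof (rule ccontr)
      assume "\<not> u < 1"
      then have "(u + A) * (u - 1) * (u - M) \<ge> 0" using hA hM h by simp
      moreover have "Q * u > 0" using hQ h by simp
      ultimately show False using h g_alt[of A M Q u] by simp
    qed
  qed
  have single: "card {u. u > 0 \<and> gpoly A M Q u = 0} = 1 \<and> card (pos_equilibria A M Q S) = 1"
    if hs: "{u. u > 0 \<and> gpoly A M Q u = 0} = {ustar}"
    using eq_char[OF hA(1) hS] hs by simp
  have P2: "(T \<le> 0 \<or> L \<ge> 0) \<longrightarrow>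
         card {u. u > 0 \<and> gpoly A M Q u = 0} = 1 \<and> card (pos_equilibria A M Q S) = 1"
  proof
    assume h: "T \<le> 0 \<or> L \<ge> 0"
    have "{u. u > 0 \<and> gpoly A M Q u = 0} = {ustar}"
    proof (rule set_eqI, rule iffI)
      fix u assume "u \<in> {u. u > 0 \<and> gpoly A M Q u = 0}"
      then show "u \<in> {ustar}" using two_roots[of u ustar A M Q] hu AM h unfolding T_def L_def by force
    qed (use hu in auto)
    then show "card {u. u > 0 \<and> gpoly A M Q u = 0} = 1 \<and> card (pos_equilibria A M Q S) = 1"
      by (rule single)
  qed
  have qD: "\<Delta> = (2*x + (ustar - T))^2" if "q x = 0" for x
    using that unfolding \<Delta>_def q_def T_def L_def by (simp add: algebra_simps power2_eq_square)
  have P3: "(T > 0 \<and> L < 0 \<and> \<Delta> < 0) \<longrightarrow>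
         card {u. u > 0 \<and> gpoly A M Q u = 0} = 1 \<and> card (pos_equilibria A M Q S) = 1"
  proof
    assume h: "T > 0 \<and> L < 0 \<and> \<Delta> < 0"
    have "{u. u > 0 \<and> gpoly A M Q u = 0} = {ustar}"
    proof (rule set_eqI, rule iffI)
      fix u assume u: "u \<in> {u. u > 0 \<and> gpoly A M Q u = 0}"
      show "u \<in> {ustar}"
      proof (rule ccontr)
        assume "u \<notin> {ustar}"
        then have "q u = 0" using u gfac[of u] by simp
        then have "\<Delta> \<ge> 0" using qD by simp
        then show False using h by simp
      qed
    qed (use hu in auto)
    then show "card {u. u > 0 \<and> gpoly A M Q u = 0} = 1 \<and> card (pos_equilibria A M Q S) = 1"
      by (rule single)
  qed
  have P4: "(T > 0 \<and> L < 0 \<and> \<Delta> \<ge> 0) \<longrightarrow>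
         (let up = (T - ustar + sqrt \<Delta>) / 2; um = (T - ustar - sqrt \<Delta>) / 2 in
            up > 0 \<and> um > 0 \<and>
            (\<forall>x. gpoly A M Q x = (x - ustar) * (x - up) * (x - um)) \<and>
            pos_equilibria A M Q S = {(x, x) | x. x \<in> {ustar, up, um}})"
  proof
    assume h: "T > 0 \<and> L < 0 \<and> \<Delta> \<ge> 0"
    define s where "s = T - ustar"
    define up where "up = (T - ustar + sqrt \<Delta>) / 2"
    define um where "um = (T - ustar - sqrt \<Delta>) / 2"
    have Ds: "\<Delta> = s^2 - 4*c" unfolding \<Delta>_def s_def c_def T_def L_def by (simp add: algebra_simps power2_eq_square)
    have sq: "sqrt \<Delta> ^ 2 = \<Delta>" using h by simp
    have qf: "q x = (x - up) * (x - um)" for x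
    proof -
      have "(x - up) * (x - um) = x^2 - s*x + (s^2 - sqrt \<Delta> ^ 2)/4"
        unfolding up_def um_def s_def by (simp add: field_simps power2_eq_square)
      also have "\<dots> = q x" unfolding sq unfolding Ds q_def s_def c_def by (simp add: field_simps power2_eq_square)
      finally show ?thesis by simp
    qed
    have spos: "s > 0"
    proof (rule ccontr)
      assume "\<not> s > 0"
      then have s0: "s \<le> 0" by simp
      have "- L = ustar * s + c" unfolding s_def c_def by (simp add: algebra_simps)
      moreover have "ustar > - s" using h unfolding s_def by simp
      then have "ustar * s \<le> - s * s" using s0 by (smt (verit) mult_right_mono_neg)
      moreover have "4*c \<le> s^2" using h Ds by simp
      ultimately have "- L \<le> 0" using zero_le_square[of s] unfolding power2_eq_square by linarith
      then show False using h by simp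
    qed
    have "sqrt \<Delta> < s"
    proof -
      have "\<Delta> < s^2" using Ds cpos by simp
      then have "sqrt \<Delta> < sqrt (s^2)" by (simp del: real_sqrt_abs)
      then show ?thesis using spos by simp
    qed
    then have umpos: "um > 0" unfolding um_def s_def by simp
    have "sqrt \<Delta> \<ge> 0" using h by simp
    then have uppos: "up > 0" unfolding up_def using spos unfolding s_def
      by (smt (verit) half_gt_zero)
    have fac: "\<forall>x. gpoly A M Q x = (x - ustar) * (x - up) * (x - um)"
      using gfac qf by simp
    have "{u. u > 0 \<and> gpoly A M Q u = 0} = {ustar, up, um}"
      using fac umpos uppos hu(1) by auto
    then have "pos_equilibria A M Q S = {(x, x) | x. x \<in> {ustar, up, um}}"
      using eq_char[OF hA(1) hS] by auto
    then show "let up = (T - ustar + sqrt \<Delta>) / 2; um = (T - ustar - sqrt \<Delta>) / 2 in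
            up > 0 \<and> um > 0 \<and>
            (\<forall>x. gpoly A M Q x = (x - ustar) * (x - up) * (x - um)) \<and>
            pos_equilibria A M Q S = {(x, x) | x. x \<in> {ustar, up, um}}"
      using umpos uppos fac unfolding up_def um_def Let_def by simp
  qed
  show ?thesis using P1 P2 P3 P4 by blast
qed

end
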